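(* Let $G=(V=[n],w)$ be a connected loopless weighted graph with $\tilde h_G<h_G$. Then there is a fractional partition $(\rho,\eta)$ of $V$ with $\|\rho\|=\|\eta\|$ (so both equal $\mathrm{vol}(G)/2$) and $\tilde h(G;\rho,\eta)=\tilde h_G$.
   Context: A weighted graph is a pair $(V,w)$ with $V=[n]$ and $w:V\times V\to[0,1]$ symmetric; it is loopless if $w(v,v)=0$ for all $v$. Put $\mathrm{vol}(v)=\sum_{u}w(u,v)$, $\mathrm{vol}(G)=\sum_v\mathrm{vol}(v)$, and for $S\subseteq V$, $\mathrm{vol}(S)=\sum_{v\in S}\mathrm{vol}(v)$. $G$ is connected if $\sum_{u\in S,v\notin S}w(u,v)>0$ for every $\emptyset\ne S\subsetneq V$. The Cheeger constant is $h_G=\min_{\emptyset\ne S\subsetneq V}\frac{\sum_{u\in S,v\notin S}w(u,v)}{\min\{\mathrm{vol}(S),\mathrm{vol}(V\setminus S)\}}$. A fractional partition of $V$ is a pair $(\rho,\eta)$ of functions $V\to[0,1]$ with $\rho+\eta\equiv1$; $\|\rho\|=\sum_u\rho(u)\mathrm{vol}(u)$, $\|\eta\|=\sum_u\eta(u)\mathrm{vol}(u)$. When both are nonzero, $\tilde h(G;\rho,\eta)=\frac{\sum_{u,v}\rho(u)\eta(v)w(u,v)}{\min\{\|\rho\|,\|\eta\|\}}$, and $\tilde h_G=\inf\tilde h(G;\rho,\eta)$ over all such fractional partitions. *)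

theory Defs
  imports "HOL-Analysis.Analysis"
begin

text \<open>Weighted graph on vertex set V = [n], represented as {0..<n}; weights w restricted to V x V.\<close>

definition weighted_graph :: "nat \<Rightarrow> (nat \<Rightarrow> nat \<Rightarrow> real) \<Rightarrow> bool" where
  "weighted_graph n w \<longleftrightarrow>
     (\<forall>u\<in>{0..<n}. \<forall>v\<in>{0..<n}. 0 \<le> w u v \<and> w u v \<le> 1 \<and> w u v = w v u)"

definition loopless :: "nat \<Rightarrow> (nat \<Rightarrow> nat \<Rightarrow> real) \<Rightarrow> bool" where
  "loopless n w \<longleftrightarrow> (\<forall>v\<in>{0..<n}. w v v = 0)"

definition vol_v :: "nat \<Rightarrow> (nat \<Rightarrow> nat \<Rightarrow> real) \<Rightarrow> nat \<Rightarrow> real" where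
  "vol_v n w v = (\<Sum>u\<in>{0..<n}. w u v)"

definition vol_set :: "nat \<Rightarrow> (nat \<Rightarrow> nat \<Rightarrow> real) \<Rightarrow> nat set \<Rightarrow> real" where
  "vol_set n w S = (\<Sum>v\<in>S. vol_v n w v)"

definition vol_graph :: "nat \<Rightarrow> (nat \<Rightarrow> nat \<Rightarrow> real) \<Rightarrow> real" where
  "vol_graph n w = vol_set n w {0..<n}"

definition cut :: "nat \<Rightarrow> (nat \<Rightarrow> nat \<Rightarrow> real) \<Rightarrow> nat set \<Rightarrow> real" where
  "cut n w S = (\<Sum>u\<in>S. \<Sum>v\<in>{0..<n} - S. w u v)"

definition connected_wg :: "nat \<Rightarrow> (nat \<Rightarrow> nat \<Rightarrow> real) \<Rightarrow> bool" where
  "connected_wg n w \<longleftrightarrow> (\<forall>S. S \<noteq> {} \<and> S \<subset> {0..<n} \<longrightarrow> cut n w S > 0)"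

definition cheeger :: "nat \<Rightarrow> (nat \<Rightarrow> nat \<Rightarrow> real) \<Rightarrow> real" where
  "cheeger n w = Inf ((\<lambda>S. cut n w S / min (vol_set n w S) (vol_set n w ({0..<n} - S)))
                       ` {S. S \<noteq> {} \<and> S \<subset> {0..<n}})"

definition frac_partition :: "nat \<Rightarrow> (nat \<Rightarrow> real) \<Rightarrow> (nat \<Rightarrow> real) \<Rightarrow> bool" where
  "frac_partition n \<rho> \<eta> \<longleftrightarrow>
     (\<forall>u\<in>{0..<n}. 0 \<le> \<rho> u \<and> \<rho> u \<le> 1 \<and> 0 \<le> \<eta> u \<and> \<eta> u \<le> 1 \<and> \<rho> u + \<eta> u = 1)"

definition fnorm :: "nat \<Rightarrow> (nat \<Rightarrow> nat \<Rightarrow> real) \<Rightarrow> (nat \<Rightarrow> real) \<Rightarrow> real" where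
  "fnorm n w f = (\<Sum>u\<in>{0..<n}. f u * vol_v n w u)"

definition frac_cheeger_ratio :: "nat \<Rightarrow> (nat \<Rightarrow> nat \<Rightarrow> real) \<Rightarrow> (nat \<Rightarrow> real) \<Rightarrow> (nat \<Rightarrow> real) \<Rightarrow> real" where
  "frac_cheeger_ratio n w \<rho> \<eta> =
     (\<Sum>u\<in>{0..<n}. \<Sum>v\<in>{0..<n}. \<rho> u * \<eta> v * w u v) / min (fnorm n w \<rho>) (fnorm n w \<eta>)"

definition frac_cheeger :: "nat \<Rightarrow> (nat \<Rightarrow> nat \<Rightarrow> real) \<Rightarrow> real" where
  "frac_cheeger n w = Inf {frac_cheeger_ratio n w \<rho> \<eta> | \<rho> \<eta>.
       frac_partition n \<rho> \<eta> \<and> fnorm n w \<rho> \<noteq> 0 \<and> fnorm n w \<eta> \<noteq> 0}"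

end

theory Submission
  imports Defs
begin



lemma cont_coord: "continuous_on S (\<lambda>x::nat\<Rightarrow>real. x i)"
  by (rule continuous_on_subset[OF continuous_on_product_coordinates]) simp

locale wgraph =
  fixes n :: nat and w :: "nat \<Rightarrow> nat \<Rightarrow> real"
  assumes wg: "weighted_graph n w" and ll: "loopless n w" and conn: "connected_wg n w" and n2: "2 \<le> n"
begin

definition Nf :: "(nat \<Rightarrow> real) \<Rightarrow> real" where
  "Nf \<rho> = (\<Sum>u\<in>{0..<n}. \<Sum>v\<in>{0..<n}. \<rho> u * (1 - \<rho> v) * w u v)"

definition Box :: "(nat \<Rightarrow> real) set" where
  "Box = {\<rho>. \<forall>u. \<rho> u \<in> (if u < n then {0..1} else {0})}"

lemma w_nonneg: "u < n \<Longrightarrow> v < n \<Longrightarrow> 0 \<le> w u v"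
  using wg unfolding weighted_graph_def by auto
lemma w_le1: "u < n \<Longrightarrow> v < n \<Longrightarrow> w u v \<le> 1"
  using wg unfolding weighted_graph_def by auto
lemma w_sym: "u < n \<Longrightarrow> v < n \<Longrightarrow> w u v = w v u"
  using wg unfolding weighted_graph_def by auto
lemma w_diag: "u < n \<Longrightarrow> w u u = 0"
  using ll unfolding loopless_def by auto

lemma vol_alt: "u < n \<Longrightarrow> vol_v n w u = (\<Sum>v\<in>{0..<n}. w u v)"
  unfolding vol_v_def by (rule sum.cong) (auto simp: w_sym)

lemma cut_single: "u < n \<Longrightarrow> cut n w {u} = vol_v n w u"
proof -
  assume u: "u < n"
  have "cut n w {u} = (\<Sum>v\<in>{0..<n} - {u}. w u v)" unfolding cut_def by simp
  also have "\<dots> = (\<Sum>v\<in>{0..<n}. w u v)"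
    using u by (subst sum.remove[of "{0..<n}" u]) (auto simp: w_diag)
  finally show ?thesis using vol_alt u by simp
qed

lemma vol_pos: "u < n \<Longrightarrow> 0 < vol_v n w u"
proof -
  assume u: "u < n"
  have ne: "{u} \<noteq> {0..<n}"
  proof
    assume "{u} = {0..<n}"
    hence "card {u} = card {0..<n}" by simp
    thus False using n2 by simp
  qed
  have "{u} \<subset> {0..<n}" using u ne by auto
  hence "cut n w {u} > 0" using conn unfolding connected_wg_def by auto
  thus ?thesis using cut_single u by simp
qed

lemma vol_nonneg: "u < n \<Longrightarrow> 0 \<le> vol_v n w u" using vol_pos by (simp add: less_imp_le)

lemma D_pos: "0 < vol_graph n w"
  unfolding vol_graph_def vol_set_def using n2 vol_pos
  by (intro sum_pos) auto

lemma fn_compl: "fnorm n w (\<lambda>u. 1 - \<rho> u) = vol_graph n w - fnorm n w \<rho>"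
  unfolding fnorm_def vol_graph_def vol_set_def
  by (simp add: left_diff_distrib sum_subtractf)

lemma fn_cong: "(\<And>u. u < n \<Longrightarrow> \<rho> u = \<sigma> u) \<Longrightarrow> fnorm n w \<rho> = fnorm n w \<sigma>"
  unfolding fnorm_def by (rule sum.cong) auto

lemma Nf_cong: "(\<And>u. u < n \<Longrightarrow> \<rho> u = \<sigma> u) \<Longrightarrow> Nf \<rho> = Nf \<sigma>"
  unfolding Nf_def by (intro sum.cong) auto

lemma Nf_compl: "Nf (\<lambda>u. 1 - \<rho> u) = Nf \<rho>"
proof -
  have "Nf (\<lambda>u. 1 - \<rho> u) = (\<Sum>u\<in>{0..<n}. \<Sum>v\<in>{0..<n}. (1 - \<rho> u) * \<rho> v * w u v)"
    unfolding Nf_def by simp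
  also have "\<dots> = (\<Sum>v\<in>{0..<n}. \<Sum>u\<in>{0..<n}. (1 - \<rho> u) * \<rho> v * w u v)"
    by (rule sum.swap)
  also have "\<dots> = Nf \<rho>" unfolding Nf_def
    by (intro sum.cong refl) (auto simp: w_sym)
  finally show ?thesis .
qed

lemma Box_compact: "compact Box"
proof -
  have eq: "Box = PiE UNIV (\<lambda>u. if u < n then {0..1::real} else {0})"
    unfolding Box_def PiE_def Pi_def extensional_def by auto
  have "compactin (product_topology (\<lambda>_. euclidean) UNIV) (PiE UNIV (\<lambda>u. if u < n then {0..1::real} else {0}))"
    by (subst compactin_PiE) auto
  thus ?thesis unfolding eq euclidean_product_topology by simp
qed

lemma fn_cont: "continuous_on A (fnorm n w)"
  unfolding fnorm_def by (intro continuous_on_sum continuous_on_mult continuous_on_const cont_coord)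

lemma Nf_cont: "continuous_on A Nf"
  unfolding Nf_def by (intro continuous_on_sum continuous_on_mult continuous_on_const continuous_on_diff cont_coord)

end


context wgraph begin

lemma fn_upd: "u < n \<Longrightarrow> fnorm n w (\<rho>(u := \<rho> u + t)) = fnorm n w \<rho> + t * vol_v n w u"
proof -
  assume u: "u < n"
  have "fnorm n w (\<rho>(u := \<rho> u + t)) = (\<Sum>a\<in>{0..<n}. \<rho> a * vol_v n w a + (if a = u then t * vol_v n w u else 0))"
    unfolding fnorm_def by (rule sum.cong) (auto simp: algebra_simps)
  also have "\<dots> = fnorm n w \<rho> + t * vol_v n w u"
    using u by (simp add: sum.distrib fnorm_def)
  finally show ?thesis .
qed

lemma Nf_upd: "u < n \<Longrightarrow> Nf (\<rho>(u := \<rho> u + t)) = Nf \<rho> + t * ((\<Sum>v\<in>{0..<n}. (1 - \<rho> v) * w u v) - (\<Sum>v\<in>{0..<n}. \<rho> v * w v u))"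
proof -
  assume u: "u < n"
  let ?V = "{0..<n}"
  have "Nf (\<rho>(u := \<rho> u + t)) = (\<Sum>a\<in>?V. \<Sum>b\<in>?V. \<rho> a * (1 - \<rho> b) * w a b
      + ((if a = u then t * (1 - \<rho> b) * w u b else 0) - (if b = u then t * \<rho> a * w a u else 0)))"
    unfolding Nf_def
  proof (intro sum.cong refl)
    fix a b assume "a \<in> ?V" "b \<in> ?V"
    show "(\<rho>(u := \<rho> u + t)) a * (1 - (\<rho>(u := \<rho> u + t)) b) * w a b =
         \<rho> a * (1 - \<rho> b) * w a b + ((if a = u then t * (1 - \<rho> b) * w u b else 0) - (if b = u then t * \<rho> a * w a u else 0))"
    proof (cases "a = u")
      case True
      note a = this
      show ?thesis
      proof (cases "b = u")
        case True
        thus ?thesis using a u by (simp add: w_diag)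
      next
        case False
        have "(\<rho> u + t) * (1 - \<rho> b) * w u b = \<rho> u * (1 - \<rho> b) * w u b + t * (1 - \<rho> b) * w u b"
          by (simp only: distrib_right)
        thus ?thesis using a False by simp
      qed
    next
      case False
      note a = this
      show ?thesis
      proof (cases "b = u")
        case True
        have "\<rho> a * (1 - (\<rho> u + t)) * w a u = \<rho> a * (1 - \<rho> u) * w a u - t * \<rho> a * w a u"
          by (simp only: right_diff_distrib left_diff_distrib distrib_left distrib_right mult_1_right mult.commute mult.left_commute diff_diff_eq)
        thus ?thesis using a True by simp
      next
        case False
        thus ?thesis using a by simp
      qed
    qed
  qed
  also have "\<dots> = Nf \<rho> + ((\<Sum>a\<in>?V. \<Sum>b\<in>?V. if a = u then t * (1 - \<rho> b) * w u b else 0)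
        - (\<Sum>a\<in>?V. \<Sum>b\<in>?V. if b = u then t * \<rho> a * w a u else 0))"
    by (simp add: sum.distrib sum_subtractf Nf_def)
  also have "(\<Sum>a\<in>?V. \<Sum>b\<in>?V. if a = u then t * (1 - \<rho> b) * w u b else 0) = (\<Sum>b\<in>?V. t * (1 - \<rho> b) * w u b)"
    using u by (subst sum.swap) simp
  also have "(\<Sum>a\<in>?V. \<Sum>b\<in>?V. if b = u then t * \<rho> a * w a u else 0) = (\<Sum>a\<in>?V. t * \<rho> a * w a u)"
    using u by simp
  finally have e1: "Nf (\<rho>(u := \<rho> u + t)) = Nf \<rho> + ((\<Sum>b\<in>?V. t * (1 - \<rho> b) * w u b) - (\<Sum>a\<in>?V. t * \<rho> a * w a u))" .
  have e2: "t * ((\<Sum>v\<in>?V. (1 - \<rho> v) * w u v) - (\<Sum>v\<in>?V. \<rho> v * w v u)) = (\<Sum>b\<in>?V. t * (1 - \<rho> b) * w u b) - (\<Sum>a\<in>?V. t * \<rho> a * w a u)"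
  proof -
    have a1: "t * (\<Sum>v\<in>?V. (1 - \<rho> v) * w u v) = (\<Sum>b\<in>?V. t * (1 - \<rho> b) * w u b)"
      by (simp add: sum_distrib_left mult.assoc)
    have a2: "t * (\<Sum>v\<in>?V. \<rho> v * w v u) = (\<Sum>a\<in>?V. t * \<rho> a * w a u)"
      by (simp add: sum_distrib_left mult.assoc)
    show ?thesis unfolding right_diff_distrib a1 a2 ..
  qed
  show ?thesis using e1 e2 by linarith
qed

definition vmin :: real where "vmin = Min (vol_v n w ` {0..<n})"

lemma vmin_pos: "0 < vmin"
  unfolding vmin_def using n2 vol_pos by (subst Min_gr_iff) auto

lemma vmin_le: "u < n \<Longrightarrow> vmin \<le> vol_v n w u"
  unfolding vmin_def by (rule Min_le) auto

lemma Box_01: assumes "\<rho> \<in> Box" "u < n" shows "0 \<le> \<rho> u \<and> \<rho> u \<le> 1"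
proof -
  have "\<rho> u \<in> (if u < n then {0..1} else {0})" using assms(1) unfolding Box_def by blast
  thus ?thesis using assms(2) by simp
qed

lemma fn_nonneg: "\<rho> \<in> Box \<Longrightarrow> 0 \<le> fnorm n w \<rho>"
  unfolding fnorm_def using Box_01 vol_nonneg by (intro sum_nonneg) auto

lemma Nf_lower: assumes "\<rho> \<in> Box"
  shows "fnorm n w \<rho> - (fnorm n w \<rho>)^2 / vmin^2 \<le> Nf \<rho>"
proof -
  let ?V = "{0..<n}"
  let ?s = "\<Sum>u\<in>?V. \<rho> u"
  have r01: "\<And>u. u < n \<Longrightarrow> 0 \<le> \<rho> u \<and> \<rho> u \<le> 1" by (rule Box_01[OF assms])
  have "Nf \<rho> = (\<Sum>u\<in>?V. \<Sum>v\<in>?V. \<rho> u * w u v - \<rho> u * \<rho> v * w u v)"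
    unfolding Nf_def by (intro sum.cong refl) (simp add: algebra_simps)
  also have "\<dots> = (\<Sum>u\<in>?V. \<rho> u * vol_v n w u) - (\<Sum>u\<in>?V. \<Sum>v\<in>?V. \<rho> u * \<rho> v * w u v)"
    by (simp add: sum_subtractf sum_distrib_left vol_alt)
  finally have eq: "Nf \<rho> = fnorm n w \<rho> - (\<Sum>u\<in>?V. \<Sum>v\<in>?V. \<rho> u * \<rho> v * w u v)"
    unfolding fnorm_def .
  have "(\<Sum>u\<in>?V. \<Sum>v\<in>?V. \<rho> u * \<rho> v * w u v) \<le> (\<Sum>u\<in>?V. \<Sum>v\<in>?V. \<rho> u * \<rho> v)"
  proof (intro sum_mono)
    fix u v assume "u \<in> ?V" "v \<in> ?V"
    thus "\<rho> u * \<rho> v * w u v \<le> \<rho> u * \<rho> v"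
      using r01 w_le1 by (simp add: mult_left_le mult_nonneg_nonneg)
  qed
  also have "\<dots> = ?s^2" by (simp add: power2_eq_square sum_product)
  also have "?s^2 \<le> (fnorm n w \<rho> / vmin)^2"
  proof (rule power_mono)
    show "0 \<le> ?s" using r01 by (intro sum_nonneg) auto
    have "vmin * ?s = (\<Sum>u\<in>?V. \<rho> u * vmin)" by (simp add: sum_distrib_left mult.commute)
    also have "\<dots> \<le> fnorm n w \<rho>" unfolding fnorm_def
      using r01 vmin_le by (intro sum_mono mult_left_mono) auto
    finally show "?s \<le> fnorm n w \<rho> / vmin" using vmin_pos by (simp add: field_simps)
  qed
  also have "\<dots> = (fnorm n w \<rho>)^2 / vmin^2" by (simp add: power_divide)
  finally show ?thesis using eq by linarith
qed

lemma eps_lemma: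
  assumes r1: "r < 1" and B: "\<rho> \<in> Box" and p: "0 < fnorm n w \<rho>"
    and le: "fnorm n w \<rho> \<le> (1 - r) * vmin^2 / 2"
  shows "r * fnorm n w \<rho> < Nf \<rho>"
proof -
  let ?f = "fnorm n w \<rho>"
  have vp: "0 < vmin^2" using vmin_pos by simp
  have "?f^2 / vmin^2 = ?f * (?f / vmin^2)" by (simp add: power2_eq_square)
  also have "\<dots> \<le> ?f * ((1 - r) / 2)"
    using p le vp by (intro mult_left_mono) (auto simp: field_simps)
  also have "\<dots> < ?f * (1 - r)" using p r1 by (intro mult_strict_left_mono) auto
  finally have "?f^2 / vmin^2 < ?f * (1 - r)" .
  thus ?thesis using Nf_lower[OF B] by (simp add: algebra_simps)
qed

lemma integral_case:
  assumes B: "\<rho> \<in> Box" and I: "\<And>u. u < n \<Longrightarrow> \<rho> u = 0 \<or> \<rho> u = 1"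
  defines "S \<equiv> {u. u < n \<and> \<rho> u = 1}"
  shows "fnorm n w \<rho> = vol_set n w S" and "Nf \<rho> = cut n w S"
proof -
  let ?V = "{0..<n}"
  have SV: "S \<subseteq> ?V" unfolding S_def by auto
  have "fnorm n w \<rho> = (\<Sum>u\<in>?V. if u \<in> S then vol_v n w u else 0)"
    unfolding fnorm_def by (rule sum.cong) (use I in \<open>auto simp: S_def\<close>)
  also have "\<dots> = vol_set n w S" unfolding vol_set_def
    using sum.inter_restrict[of ?V "vol_v n w" S] Int_absorb1[OF SV] by simp
  finally show "fnorm n w \<rho> = vol_set n w S" .
  have "Nf \<rho> = (\<Sum>u\<in>?V. if u \<in> S then (\<Sum>v\<in>?V. if v \<in> ?V - S then w u v else 0) else 0)"
    unfolding Nf_def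
  proof (rule sum.cong[OF refl])
    fix u assume u: "u \<in> ?V"
    show "(\<Sum>v\<in>?V. \<rho> u * (1 - \<rho> v) * w u v) = (if u \<in> S then (\<Sum>v\<in>?V. if v \<in> ?V - S then w u v else 0) else 0)"
    proof (cases "u \<in> S")
      case True
      hence "\<rho> u = 1" by (simp add: S_def)
      have "(\<Sum>v\<in>?V. \<rho> u * (1 - \<rho> v) * w u v) = (\<Sum>v\<in>?V. if v \<in> ?V - S then w u v else 0)"
      proof (rule sum.cong[OF refl])
        fix v assume v: "v \<in> ?V"
        show "\<rho> u * (1 - \<rho> v) * w u v = (if v \<in> ?V - S then w u v else 0)"
        proof (cases "v \<in> S")
          case True thus ?thesis using \<open>\<rho> u = 1\<close> by (simp add: S_def)
        next
          case False
          hence "\<rho> v = 0" using I[of v] v by (auto simp: S_def)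
          thus ?thesis using \<open>\<rho> u = 1\<close> False v by simp
        qed
      qed
      thus ?thesis using True by simp
    next
      case False
      hence "\<rho> u = 0" using I u by (auto simp: S_def)
      thus ?thesis using False by simp
    qed
  qed
  also have "\<dots> = cut n w S"
  proof -
    have inner: "(\<Sum>v\<in>?V. if v \<in> ?V - S then w u v else 0) = (\<Sum>v\<in>?V - S. w u v)" for u
    proof -
      have "(\<Sum>v\<in>?V. if v \<in> ?V - S then w u v else 0) = sum (w u) (?V \<inter> (?V - S))"
        by (rule sum.inter_restrict[symmetric]) simp
      also have "?V \<inter> (?V - S) = ?V - S" by auto
      finally show ?thesis .
    qed
    hence "(\<Sum>u\<in>?V. if u \<in> S then (\<Sum>v\<in>?V. if v \<in> ?V - S then w u v else 0) else 0)
       = (\<Sum>u\<in>?V. if u \<in> S then (\<Sum>v\<in>?V - S. w u v) else 0)" by (simp only: inner)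
    also have "\<dots> = (\<Sum>u\<in>S. \<Sum>v\<in>?V - S. w u v)"
      using sum.inter_restrict[of ?V "\<lambda>u. (\<Sum>v\<in>?V - S. w u v)" S] Int_absorb1[OF SV] by simp
    finally show ?thesis unfolding cut_def .
  qed
  finally show "Nf \<rho> = cut n w S" .
qed

lemma cheeger_le:
  assumes "S \<noteq> {}" "S \<subset> {0..<n}"
  shows "cheeger n w \<le> cut n w S / min (vol_set n w S) (vol_set n w ({0..<n} - S))"
  unfolding cheeger_def
proof (rule cInf_lower)
  show "cut n w S / min (vol_set n w S) (vol_set n w ({0..<n} - S))
     \<in> (\<lambda>S. cut n w S / min (vol_set n w S) (vol_set n w ({0..<n} - S))) ` {S. S \<noteq> {} \<and> S \<subset> {0..<n}}"
    using assms by auto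
  have "finite {S. S \<noteq> {} \<and> S \<subset> {0..<n}}"
    by (rule finite_subset[of _ "Pow {0..<n}"]) auto
  thus "bdd_below ((\<lambda>S. cut n w S / min (vol_set n w S) (vol_set n w ({0..<n} - S))) ` {S. S \<noteq> {} \<and> S \<subset> {0..<n}})"
    by (intro bdd_below_finite finite_imageI)
qed

lemma vol_set_pos: "S \<noteq> {} \<Longrightarrow> S \<subseteq> {0..<n} \<Longrightarrow> 0 < vol_set n w S"
  unfolding vol_set_def using vol_pos
  by (intro sum_pos) (auto intro: finite_subset)

lemma cheeger_le1: "cheeger n w \<le> 1"
proof -
  let ?V = "{0..<n}"
  have ne: "{0} \<noteq> ?V"
  proof
    assume "{0} = ?V"
    hence "card {0::nat} = card ?V" by simp
    thus False using n2 by simp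
  qed
  have S: "{0::nat} \<subset> ?V" using n2 ne by auto
  have c: "cut n w {0} = vol_set n w {0}" using cut_single n2 by (simp add: vol_set_def)
  have "cut n w {0} = (\<Sum>v\<in>?V - {0}. w 0 v)" unfolding cut_def by simp
  also have "\<dots> \<le> (\<Sum>v\<in>?V - {0}. vol_v n w v)"
  proof (rule sum_mono)
    fix v assume v: "v \<in> ?V - {0}"
    have "w 0 v \<le> (\<Sum>a\<in>?V. w a v)"
      using v n2 w_nonneg by (intro member_le_sum) auto
    thus "w 0 v \<le> vol_v n w v" by (simp add: vol_v_def)
  qed
  finally have c2: "cut n w {0} \<le> vol_set n w (?V - {0})" by (simp add: vol_set_def)
  have p1: "0 < vol_set n w {0}" using n2 by (intro vol_set_pos) auto
  have p2: "0 < vol_set n w (?V - {0})" using S by (intro vol_set_pos) auto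
  have "cut n w {0} / min (vol_set n w {0}) (vol_set n w (?V - {0})) \<le> 1"
    using c c2 p1 p2 by (simp add: min_def)
  moreover have "cheeger n w \<le> cut n w {0} / min (vol_set n w {0}) (vol_set n w (?V - {0}))"
    using S by (intro cheeger_le) auto
  ultimately show ?thesis by linarith
qed

end


context wgraph begin

lemma Box_upd: "\<rho> \<in> Box \<Longrightarrow> u < n \<Longrightarrow> 0 \<le> x \<Longrightarrow> x \<le> 1 \<Longrightarrow> \<rho>(u := x) \<in> Box"
proof -
  assume B: "\<rho> \<in> Box" and u: "u < n" and x: "0 \<le> x" "x \<le> 1"
  have "(\<rho>(u := x)) v \<in> (if v < n then {0..1} else {0})" for v
  proof (cases "v = u")
    case True thus ?thesis using u x by simp
  next
    case False
    have "\<rho> v \<in> (if v < n then {0..1} else {0})" using B unfolding Box_def by blast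
    thus ?thesis using False by simp
  qed
  thus ?thesis unfolding Box_def by blast
qed

lemma closed_le1: "closed {\<rho>. c \<le> fnorm n w \<rho>}"
  by (rule closed_Collect_le) (auto intro: fn_cont continuous_on_const)
lemma closed_le2: "closed {\<rho>. fnorm n w \<rho> \<le> c}"
  by (rule closed_Collect_le) (auto intro: fn_cont continuous_on_const)
lemma closed_le3: "closed {\<rho>. Nf \<rho> \<le> m * fnorm n w \<rho>}"
  by (rule closed_Collect_le) (auto intro: fn_cont Nf_cont continuous_on_const continuous_on_mult)
lemma closed_eq1: "closed {\<rho>. fnorm n w \<rho> = c}"
  by (rule closed_Collect_eq) (auto intro: fn_cont continuous_on_const)

lemma key:
  assumes B0: "\<rho>0 \<in> Box" and p0: "0 < fnorm n w \<rho>0" and half0: "fnorm n w \<rho>0 \<le> vol_graph n w / 2"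
    and lt0: "Nf \<rho>0 / fnorm n w \<rho>0 < cheeger n w"
  shows "\<exists>\<rho>\<in>Box. fnorm n w \<rho> = vol_graph n w / 2 \<and> Nf \<rho> / (vol_graph n w / 2) \<le> Nf \<rho>0 / fnorm n w \<rho>0"
proof -
  define D where "D = vol_graph n w"
  define r where "r = Nf \<rho>0 / fnorm n w \<rho>0"
  have Dp: "0 < D" unfolding D_def by (rule D_pos)
  have r1: "r < 1" using lt0 cheeger_le1 unfolding r_def by linarith
  have rf0: "r * fnorm n w \<rho>0 = Nf \<rho>0" unfolding r_def using p0 by simp
  define \<epsilon> where "\<epsilon> = (1 - r) * vmin^2 / 2"
  have ep: "0 < \<epsilon>" unfolding \<epsilon>_def using r1 vmin_pos by simp
  have eps: "\<And>\<rho>. \<rho> \<in> Box \<Longrightarrow> 0 < fnorm n w \<rho> \<Longrightarrow> fnorm n w \<rho> \<le> \<epsilon> \<Longrightarrow> r * fnorm n w \<rho> < Nf \<rho>"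
    unfolding \<epsilon>_def by (rule eps_lemma[OF r1])
  have e0: "\<epsilon> < fnorm n w \<rho>0"
  proof (rule ccontr)
    assume "\<not> \<epsilon> < fnorm n w \<rho>0"
    hence "r * fnorm n w \<rho>0 < Nf \<rho>0" using eps[OF B0 p0] by simp
    thus False using rf0 by simp
  qed
  define K where "K = Box \<inter> {\<rho>. \<epsilon> \<le> fnorm n w \<rho>} \<inter> {\<rho>. fnorm n w \<rho> \<le> D / 2}"
  have Kc: "compact K" unfolding K_def
    by (intro compact_Int_closed Box_compact closed_le1 closed_le2)
  have K0: "\<rho>0 \<in> K" unfolding K_def D_def using B0 e0 half0 by simp
  have Kfn: "\<And>\<rho>. \<rho> \<in> K \<Longrightarrow> \<epsilon> \<le> fnorm n w \<rho>" unfolding K_def by simp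
  have Kcont: "continuous_on K (\<lambda>\<rho>. Nf \<rho> / fnorm n w \<rho>)"
    by (intro continuous_on_divide Nf_cont fn_cont) (use Kfn ep in force)
  obtain \<rho>1 where \<rho>1K: "\<rho>1 \<in> K" and \<rho>1min: "\<And>\<rho>. \<rho> \<in> K \<Longrightarrow> Nf \<rho>1 / fnorm n w \<rho>1 \<le> Nf \<rho> / fnorm n w \<rho>"
    using continuous_attains_inf[OF Kc _ Kcont] K0 by blast
  define m where "m = Nf \<rho>1 / fnorm n w \<rho>1"
  have mr: "m \<le> r" unfolding m_def r_def using \<rho>1min[OF K0] .
  have mK: "\<And>\<rho>. \<rho> \<in> K \<Longrightarrow> m * fnorm n w \<rho> \<le> Nf \<rho>"
  proof -
    fix \<rho> assume "\<rho> \<in> K"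
    hence "m \<le> Nf \<rho> / fnorm n w \<rho>" and "0 < fnorm n w \<rho>" using \<rho>1min Kfn ep unfolding m_def by force+
    thus "m * fnorm n w \<rho> \<le> Nf \<rho>" by (simp add: pos_le_divide_eq)
  qed
  have \<rho>1pos: "0 < fnorm n w \<rho>1" using Kfn[OF \<rho>1K] ep by simp
  define Z where "Z = K \<inter> {\<rho>. Nf \<rho> \<le> m * fnorm n w \<rho>}"
  have Zc: "compact Z" unfolding Z_def by (intro compact_Int_closed Kc closed_le3)
  have Z1: "\<rho>1 \<in> Z" unfolding Z_def using \<rho>1K \<rho>1pos by (simp add: m_def)
  obtain \<rho>2 where \<rho>2Z: "\<rho>2 \<in> Z" and \<rho>2max: "\<And>\<rho>. \<rho> \<in> Z \<Longrightarrow> fnorm n w \<rho> \<le> fnorm n w \<rho>2"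
    using continuous_attains_sup[OF Zc _ fn_cont] Z1 by blast
  have \<rho>2K: "\<rho>2 \<in> K" and \<rho>2le: "Nf \<rho>2 \<le> m * fnorm n w \<rho>2" using \<rho>2Z unfolding Z_def by auto
  have \<rho>2B: "\<rho>2 \<in> Box" and \<rho>2e: "\<epsilon> \<le> fnorm n w \<rho>2" and \<rho>2h: "fnorm n w \<rho>2 \<le> D / 2"
    using \<rho>2K unfolding K_def by auto
  show ?thesis
  proof (cases "fnorm n w \<rho>2 = D / 2")
    case True
    have "Nf \<rho>2 / (D / 2) \<le> m" using \<rho>2le True Dp by (simp add: divide_le_eq)
    thus ?thesis using True \<rho>2B mr unfolding D_def r_def by (intro bexI[of _ \<rho>2]) auto
  next
    case False
    hence \<rho>2h': "fnorm n w \<rho>2 < D / 2" using \<rho>2h by simp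
    have \<rho>2e': "\<epsilon> < fnorm n w \<rho>2"
    proof (rule ccontr)
      assume "\<not> \<epsilon> < fnorm n w \<rho>2"
      hence "r * fnorm n w \<rho>2 < Nf \<rho>2" using eps[OF \<rho>2B] \<rho>2e ep by simp
      moreover have "m * fnorm n w \<rho>2 \<le> r * fnorm n w \<rho>2"
        using mr \<rho>2e ep by (intro mult_right_mono) auto
      ultimately show False using \<rho>2le by simp
    qed
    have \<rho>2eq: "Nf \<rho>2 = m * fnorm n w \<rho>2" using \<rho>2le mK[OF \<rho>2K] by simp
    have integ: "\<rho>2 u = 0 \<or> \<rho>2 u = 1" if u: "u < n" for u
    proof (rule ccontr)
      assume "\<not> (\<rho>2 u = 0 \<or> \<rho>2 u = 1)"
      hence u0: "0 < \<rho>2 u" and u1: "\<rho>2 u < 1" using Box_01[OF \<rho>2B u] by auto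
      define c where "c = (\<Sum>v\<in>{0..<n}. (1 - \<rho>2 v) * w u v) - (\<Sum>v\<in>{0..<n}. \<rho>2 v * w v u)"
      define d where "d = c - m * vol_v n w u"
      have vu: "0 < vol_v n w u" using vol_pos u .
      have gt: "Nf (\<rho>2(u := \<rho>2 u + t)) - m * fnorm n w (\<rho>2(u := \<rho>2 u + t)) = t * d" for t
        unfolding Nf_upd[OF u] fn_upd[OF u] d_def c_def[symmetric] using \<rho>2eq by (simp add: algebra_simps)
      have inK: "\<rho>2(u := \<rho>2 u + t) \<in> K" if "0 \<le> \<rho>2 u + t" "\<rho>2 u + t \<le> 1"
        "\<epsilon> \<le> fnorm n w \<rho>2 + t * vol_v n w u" "fnorm n w \<rho>2 + t * vol_v n w u \<le> D / 2" for t
        unfolding K_def using that Box_upd[OF \<rho>2B u] by (simp add: fn_upd[OF u])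
      define t1 where "t1 = min (1 - \<rho>2 u) ((D / 2 - fnorm n w \<rho>2) / vol_v n w u)"
      have t1p: "0 < t1" unfolding t1_def using u1 \<rho>2h' vu by simp
      have t1a: "t1 \<le> 1 - \<rho>2 u" unfolding t1_def by simp
      have t1b: "t1 * vol_v n w u \<le> D / 2 - fnorm n w \<rho>2"
      proof -
        have "t1 \<le> (D / 2 - fnorm n w \<rho>2) / vol_v n w u" unfolding t1_def by simp
        thus ?thesis using vu by (simp add: pos_le_divide_eq)
      qed
      have K1: "\<rho>2(u := \<rho>2 u + t1) \<in> K"
      proof (rule inK)
        have "0 \<le> t1 * vol_v n w u" using t1p vu by simp
        thus "0 \<le> \<rho>2 u + t1" "\<rho>2 u + t1 \<le> 1" "\<epsilon> \<le> fnorm n w \<rho>2 + t1 * vol_v n w u"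
          "fnorm n w \<rho>2 + t1 * vol_v n w u \<le> D / 2" using t1p t1a t1b u0 \<rho>2e by linarith+
      qed
      have d1: "0 \<le> t1 * d" using mK[OF K1] gt[of t1] by simp
      hence dnn: "0 \<le> d" using t1p by (simp add: zero_le_mult_iff)
      define t2 where "t2 = min (\<rho>2 u) ((fnorm n w \<rho>2 - \<epsilon>) / vol_v n w u)"
      have t2p: "0 < t2" unfolding t2_def using u0 \<rho>2e' vu by simp
      have t2a: "t2 \<le> \<rho>2 u" unfolding t2_def by simp
      have t2b: "t2 * vol_v n w u \<le> fnorm n w \<rho>2 - \<epsilon>"
      proof -
        have "t2 \<le> (fnorm n w \<rho>2 - \<epsilon>) / vol_v n w u" unfolding t2_def by simp
        thus ?thesis using vu by (simp add: pos_le_divide_eq)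
      qed
      have K2: "\<rho>2(u := \<rho>2 u + (- t2)) \<in> K"
      proof (rule inK)
        have "0 \<le> t2 * vol_v n w u" using t2p vu by simp
        thus "0 \<le> \<rho>2 u + - t2" "\<rho>2 u + - t2 \<le> 1" "\<epsilon> \<le> fnorm n w \<rho>2 + - t2 * vol_v n w u"
          "fnorm n w \<rho>2 + - t2 * vol_v n w u \<le> D / 2" using t2p t2a t2b u1 \<rho>2h' by linarith+
      qed
      have "0 \<le> (- t2) * d" using mK[OF K2] gt[of "- t2"] by simp
      hence "d \<le> 0" using t2p by (simp add: mult_le_0_iff)
      hence d0: "d = 0" using dnn by simp
      have "\<rho>2(u := \<rho>2 u + t1) \<in> Z" unfolding Z_def using K1 gt[of t1] d0 by simp
      hence "fnorm n w (\<rho>2(u := \<rho>2 u + t1)) \<le> fnorm n w \<rho>2" by (rule \<rho>2max)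
      moreover have "0 < t1 * vol_v n w u" using t1p vu by simp
      ultimately show False using fn_upd[OF u, of \<rho>2 t1] by linarith
    qed
    define S where "S = {u. u < n \<and> \<rho>2 u = 1}"
    have fS: "fnorm n w \<rho>2 = vol_set n w S" and cS: "Nf \<rho>2 = cut n w S"
      using integral_case[OF \<rho>2B integ] unfolding S_def by auto
    have SV: "S \<subseteq> {0..<n}" unfolding S_def by auto
    have Sne: "S \<noteq> {}" using fS \<rho>2e ep by (auto simp: vol_set_def)
    have compl: "vol_set n w ({0..<n} - S) = D - vol_set n w S"
      unfolding D_def vol_graph_def vol_set_def using SV by (simp add: sum_diff)
    have Sps: "S \<subset> {0..<n}"
    proof -
      have "S \<noteq> {0..<n}" using fS \<rho>2h' Dp unfolding D_def vol_graph_def by auto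
      thus ?thesis using SV by auto
    qed
    have mn: "min (vol_set n w S) (vol_set n w ({0..<n} - S)) = vol_set n w S"
      using compl fS \<rho>2h' by simp
    have "cheeger n w \<le> cut n w S / vol_set n w S" using cheeger_le[OF Sne Sps] mn by simp
    also have "\<dots> = m"
    proof -
      have "0 < vol_set n w S" using fS \<rho>2e ep by simp
      thus ?thesis using cS fS \<rho>2eq by (simp add: divide_eq_eq)
    qed
    finally have "cheeger n w \<le> r" using mr by simp
    hence False using lt0 unfolding r_def by simp
    thus ?thesis ..
  qed
qed

end


context wgraph begin

lemma fp_nonneg: "(\<And>u. u < n \<Longrightarrow> 0 \<le> f u) \<Longrightarrow> 0 \<le> fnorm n w f"
  unfolding fnorm_def using vol_nonneg by (intro sum_nonneg mult_nonneg_nonneg) auto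

lemma KC:
  assumes fp: "frac_partition n \<rho> \<eta>" and nz1: "fnorm n w \<rho> \<noteq> 0" and nz2: "fnorm n w \<eta> \<noteq> 0"
    and lt: "frac_cheeger_ratio n w \<rho> \<eta> < cheeger n w"
  shows "\<exists>\<sigma>\<in>Box. fnorm n w \<sigma> = vol_graph n w / 2 \<and> Nf \<sigma> / (vol_graph n w / 2) \<le> frac_cheeger_ratio n w \<rho> \<eta>"
proof -
  define D where "D = vol_graph n w"
  have fpu: "\<And>u. u < n \<Longrightarrow> 0 \<le> \<rho> u \<and> \<rho> u \<le> 1 \<and> 0 \<le> \<eta> u \<and> \<eta> u \<le> 1 \<and> \<rho> u + \<eta> u = 1"
    using fp unfolding frac_partition_def by auto
  define \<rho>' where "\<rho>' = (\<lambda>u. if u < n then \<rho> u else 0)"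
  have B': "\<rho>' \<in> Box" unfolding Box_def \<rho>'_def using fpu by auto
  have f1: "fnorm n w \<rho>' = fnorm n w \<rho>" by (rule fn_cong) (simp add: \<rho>'_def)
  have f2: "fnorm n w \<eta> = D - fnorm n w \<rho>'"
  proof -
    have "fnorm n w \<eta> = fnorm n w (\<lambda>u. 1 - \<rho>' u)" by (rule fn_cong) (use fpu in \<open>force simp: \<rho>'_def\<close>)
    thus ?thesis unfolding fn_compl D_def .
  qed
  have ratio: "frac_cheeger_ratio n w \<rho> \<eta> = Nf \<rho>' / min (fnorm n w \<rho>') (D - fnorm n w \<rho>')"
    unfolding frac_cheeger_ratio_def Nf_def f1[symmetric] f2
  proof (intro arg_cong2[where f = "(/)"] refl sum.cong)
    fix u v assume "u \<in> {0..<n}" "v \<in> {0..<n}"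
    thus "\<rho> u * \<eta> v * w u v = \<rho>' u * (1 - \<rho>' v) * w u v" using fpu[of v] by (simp add: \<rho>'_def)
  qed
  have p1: "0 < fnorm n w \<rho>'" using nz1 f1 fp_nonneg[of \<rho>] fpu by force
  have p2: "0 < D - fnorm n w \<rho>'" using nz2 f2 fp_nonneg[of \<eta>] fpu by force
  show ?thesis
  proof (cases "fnorm n w \<rho>' \<le> D / 2")
    case True
    hence mn: "min (fnorm n w \<rho>') (D - fnorm n w \<rho>') = fnorm n w \<rho>'" by simp
    have "Nf \<rho>' / fnorm n w \<rho>' < cheeger n w" using lt ratio mn by simp
    from key[OF B' p1 True[unfolded D_def] this]
    have "\<exists>\<sigma>\<in>Box. fnorm n w \<sigma> = D / 2 \<and> Nf \<sigma> / (D / 2) \<le> Nf \<rho>' / fnorm n w \<rho>'" unfolding D_def .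
    thus ?thesis unfolding ratio mn D_def[symmetric] .
  next
    case False
    define \<rho>3 where "\<rho>3 = (\<lambda>u. if u < n then 1 - \<rho> u else 0)"
    have B3: "\<rho>3 \<in> Box" unfolding Box_def \<rho>3_def using fpu by auto
    have f3: "fnorm n w \<rho>3 = D - fnorm n w \<rho>'"
    proof -
      have "fnorm n w \<rho>3 = fnorm n w (\<lambda>u. 1 - \<rho>' u)" by (rule fn_cong) (simp add: \<rho>'_def \<rho>3_def)
      thus ?thesis unfolding fn_compl D_def .
    qed
    have N3: "Nf \<rho>3 = Nf \<rho>'"
    proof -
      have "Nf \<rho>3 = Nf (\<lambda>u. 1 - \<rho>' u)" by (rule Nf_cong) (simp add: \<rho>'_def \<rho>3_def)
      thus ?thesis using Nf_compl by simp
    qed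
    have mn: "min (fnorm n w \<rho>') (D - fnorm n w \<rho>') = fnorm n w \<rho>3" using False f3 by simp
    have p3: "0 < fnorm n w \<rho>3" using p2 f3 by simp
    have h3: "fnorm n w \<rho>3 \<le> vol_graph n w / 2" using False f3 unfolding D_def by simp
    have "Nf \<rho>3 / fnorm n w \<rho>3 < cheeger n w" using lt ratio mn N3 by simp
    from key[OF B3 p3 h3 this]
    have "\<exists>\<sigma>\<in>Box. fnorm n w \<sigma> = D / 2 \<and> Nf \<sigma> / (D / 2) \<le> Nf \<rho>3 / fnorm n w \<rho>3" unfolding D_def .
    thus ?thesis unfolding ratio mn N3 D_def[symmetric] .
  qed
qed

end

lemma small_case:
  assumes "loopless n w" "n < 2"
  shows "frac_cheeger n w = cheeger n w"
proof -
  have fz: "fnorm n w \<rho> = 0" for \<rho>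
  proof (cases n)
    case 0 thus ?thesis by (simp add: fnorm_def)
  next
    case (Suc k)
    hence "n = 1" using assms(2) by simp
    thus ?thesis using assms(1) by (simp add: fnorm_def vol_v_def loopless_def)
  qed
  have e1: "{frac_cheeger_ratio n w \<rho> \<eta> | \<rho> \<eta>. frac_partition n \<rho> \<eta> \<and> fnorm n w \<rho> \<noteq> 0 \<and> fnorm n w \<eta> \<noteq> 0} = {}"
    using fz by auto
  have E: "{S. S \<noteq> {} \<and> S \<subset> {0..<n}} = {}"
  proof (cases n)
    case 0 thus ?thesis by auto
  next
    case (Suc k)
    hence "n = 1" using assms(2) by simp
    thus ?thesis by auto
  qed
  show ?thesis unfolding frac_cheeger_def cheeger_def e1 E image_empty ..
qed

theorem mainTheorem11:
  fixes n :: nat and w :: "nat \<Rightarrow> nat \<Rightarrow> real"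
  assumes "weighted_graph n w"
    and "loopless n w"
    and "connected_wg n w"
    and "frac_cheeger n w < cheeger n w"
  shows "\<exists>\<rho> \<eta>. frac_partition n \<rho> \<eta>
           \<and> fnorm n w \<rho> = fnorm n w \<eta>
           \<and> fnorm n w \<rho> \<noteq> 0
           \<and> frac_cheeger_ratio n w \<rho> \<eta> = frac_cheeger n w"
proof -
  have n2: "2 \<le> n"
  proof (rule ccontr)
    assume "\<not> 2 \<le> n"
    hence "frac_cheeger n w = cheeger n w" using small_case assms(2) by simp
    thus False using assms(4) by simp
  qed
  interpret G: wgraph n w using assms n2 by unfold_locales
  define D where "D = vol_graph n w"
  have Dp: "0 < D" unfolding D_def by (rule G.D_pos)
  define F where "F = {frac_cheeger_ratio n w \<rho> \<eta> | \<rho> \<eta>. frac_partition n \<rho> \<eta> \<and> fnorm n w \<rho> \<noteq> 0 \<and> fnorm n w \<eta> \<noteq> 0}"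
  have hF: "frac_cheeger n w = Inf F" unfolding frac_cheeger_def F_def ..
  have Fne: "F \<noteq> {}"
  proof -
    define \<rho> where "\<rho> = (\<lambda>u::nat. if u = 0 then 1 else (0::real))"
    define \<eta> where "\<eta> = (\<lambda>u. 1 - \<rho> u)"
    have fp: "frac_partition n \<rho> \<eta>" unfolding frac_partition_def \<rho>_def \<eta>_def by auto
    have "\<rho> 0 * vol_v n w 0 \<le> fnorm n w \<rho>" unfolding fnorm_def
      using n2 G.vol_nonneg by (intro member_le_sum) (auto simp: \<rho>_def)
    moreover have "0 < \<rho> 0 * vol_v n w 0" using G.vol_pos n2 by (simp add: \<rho>_def)
    ultimately have a: "fnorm n w \<rho> \<noteq> 0" by linarith
    have "\<eta> 1 * vol_v n w 1 \<le> fnorm n w \<eta>" unfolding fnorm_def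
      using n2 G.vol_nonneg by (intro member_le_sum) (auto simp: \<rho>_def \<eta>_def)
    moreover have "0 < \<eta> 1 * vol_v n w 1" using G.vol_pos n2 by (simp add: \<rho>_def \<eta>_def)
    ultimately have b: "fnorm n w \<eta> \<noteq> 0" by linarith
    show ?thesis unfolding F_def using fp a b by blast
  qed
  obtain x0 where x0F: "x0 \<in> F" and x0h: "x0 < cheeger n w"
    using cInf_lessD[OF Fne] assms(4) hF by auto
  obtain \<sigma>1 where \<sigma>1B: "\<sigma>1 \<in> G.Box" and \<sigma>1h: "fnorm n w \<sigma>1 = D / 2" and \<sigma>1x: "G.Nf \<sigma>1 / (D / 2) \<le> x0"
    using x0F G.KC x0h unfolding F_def D_def by blast
  define Bal where "Bal = G.Box \<inter> {\<sigma>. fnorm n w \<sigma> = D / 2}"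
  have Bc: "compact Bal" unfolding Bal_def by (intro compact_Int_closed G.Box_compact G.closed_eq1)
  have B1: "\<sigma>1 \<in> Bal" unfolding Bal_def using \<sigma>1B \<sigma>1h by simp
  obtain \<sigma> where \<sigma>Bal: "\<sigma> \<in> Bal" and \<sigma>min: "\<And>\<tau>. \<tau> \<in> Bal \<Longrightarrow> G.Nf \<sigma> \<le> G.Nf \<tau>"
    using continuous_attains_inf[OF Bc _ G.Nf_cont] B1 by blast
  have \<sigma>B: "\<sigma> \<in> G.Box" and \<sigma>h: "fnorm n w \<sigma> = D / 2" using \<sigma>Bal unfolding Bal_def by auto
  define m where "m = G.Nf \<sigma> / (D / 2)"
  have mle: "m \<le> G.Nf \<tau> / (D / 2)" if "\<tau> \<in> Bal" for \<tau>
    unfolding m_def using \<sigma>min[OF that] Dp by (simp add: divide_right_mono)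
  have mh: "m < cheeger n w" using mle[OF B1] \<sigma>1x x0h by simp
  define \<eta> where "\<eta> = (\<lambda>u. 1 - \<sigma> u)"
  have fp: "frac_partition n \<sigma> \<eta>" unfolding frac_partition_def \<eta>_def using G.Box_01[OF \<sigma>B] by auto
  have \<eta>h: "fnorm n w \<eta> = D / 2" unfolding \<eta>_def G.fn_compl \<sigma>h D_def[symmetric] by simp
  have rat: "frac_cheeger_ratio n w \<sigma> \<eta> = m"
    unfolding frac_cheeger_ratio_def m_def G.Nf_def \<eta>h \<sigma>h by (simp add: \<eta>_def)
  have nz: "fnorm n w \<sigma> \<noteq> 0" using \<sigma>h Dp by simp
  have mF: "m \<in> F" unfolding F_def mem_Collect_eq using fp nz \<eta>h \<sigma>h rat Dp
    by (intro exI[of _ \<sigma>] exI[of _ \<eta>]) simp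
  have "Inf F = m"
  proof (rule cInf_eq_minimum[OF mF])
    fix y assume "y \<in> F"
    then obtain \<rho>' \<eta>' where y: "y = frac_cheeger_ratio n w \<rho>' \<eta>'" and fp': "frac_partition n \<rho>' \<eta>'"
      and nz1: "fnorm n w \<rho>' \<noteq> 0" and nz2: "fnorm n w \<eta>' \<noteq> 0" unfolding F_def by blast
    show "m \<le> y"
    proof (cases "y < cheeger n w")
      case True
      then obtain \<tau> where \<tau>B: "\<tau> \<in> G.Box" and \<tau>h: "fnorm n w \<tau> = D / 2" and \<tau>y: "G.Nf \<tau> / (D / 2) \<le> y"
        using G.KC[OF fp' nz1 nz2] y unfolding D_def by blast
      have "\<tau> \<in> Bal" unfolding Bal_def using \<tau>B \<tau>h by simp
      thus ?thesis using mle \<tau>y by force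
    next
      case False thus ?thesis using mh by simp
    qed
  qed
  thus ?thesis using fp nz \<eta>h \<sigma>h rat hF by (intro exI[of _ \<sigma>] exI[of _ \<eta>]) simp
qed



end
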